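(* Let $X$ be a one- or two-sided subshift with $\mathcal L(X)=\mathcal L(\tilde X)$ and let $p_X(n)$ be the number of blocks of length $n$ in $\mathcal L(X)$. Then for every $n\ge1$ the number of distinct paths of length $n$ in the HB diagram of $X$ that begin at a vertex which is a block of length one equals $p_X(n)$.
   Context: Let $\mathcal A$ be a finite alphabet and $\sigma$ the shift, $(\sigma x)_i=x_{i+1}$. A one-sided subshift is a nonempty closed $\sigma$-invariant $X^+\subseteq\mathcal A^{\mathbb N}$; its natural extension is $\tilde X=\{x\in\mathcal A^{\mathbb Z}: x_px_{p+1}\dots\in X^+ \text{ for all } p\in\mathbb Z\}$. For a two-sided subshift $X\subseteq\mathcal A^{\mathbb Z}$, $X^+$ is the set of right rays of points of $X$, so $\tilde X=X$. $\mathcal L(Y)$ denotes the set of finite blocks occurring in points of $Y$. For $a_{-n}\dots a_0\in\mathcal L(\tilde X)$, $\mathrm{fol}(a_{-n}\dots a_0)=\{b_0b_1\dots\in X^+:\exists b\in\tilde X \text{ with } b_{-n}\dots b_0=a_{-n}\dots a_0\}$. A block $a_{-n}\dots a_0\in\mathcal L(\tilde X)$ with $n\ge1$ is significant if $\mathrm{fol}(a_{-n}\dots a_0)\subsetneq\mathrm{fol}(a_{-n+1}\dots a_0)$; single symbols in $\mathcal L(\tilde X)$ are also counted as significant. $\mathrm{sig}(a_{-n}\dots a_0)$ is the longest significant suffix. The HB diagram has vertex set the significant blocks of $\tilde X$ and an arrow $\alpha\to\beta$ iff there is a symbol $b$ with $\alpha b\in\mathcal L(\tilde X)$ and $\beta=\mathrm{sig}(\alpha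 b)$. The length of a path is its number of vertices. *)

theory Defs
  imports Main
begin

text \<open>Closedness is in the product
  topology of the discrete alphabet, written out as: a point all of whose
  central (resp. initial) blocks are matched by points of the set lies in the set.\<close>

definition shift1 :: "(nat \<Rightarrow> 'a) \<Rightarrow> (nat \<Rightarrow> 'a)" where
  "shift1 x = (\<lambda>i. x (Suc i))"

definition shift2 :: "(int \<Rightarrow> 'a) \<Rightarrow> (int \<Rightarrow> 'a)" where
  "shift2 x = (\<lambda>i. x (i + 1))"

definition closed1 :: "(nat \<Rightarrow> 'a) set \<Rightarrow> bool" where
  "closed1 X \<longleftrightarrow> (\<forall>x. (\<forall>n. \<exists>y\<in>X. \<forall>i<n. y i = x i) \<longrightarrow> x \<in> X)"

definition closed2 :: "(int \<Rightarrow> 'a) set \<Rightarrow> bool" where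
  "closed2 X \<longleftrightarrow> (\<forall>x. (\<forall>n::nat. \<exists>y\<in>X. \<forall>i. \<bar>i\<bar> \<le> int n \<longrightarrow> y i = x i) \<longrightarrow> x \<in> X)"

definition subshift1 :: "(nat \<Rightarrow> 'a::finite) set \<Rightarrow> bool" where
  "subshift1 X \<longleftrightarrow> X \<noteq> {} \<and> closed1 X \<and> shift1 ` X \<subseteq> X"

definition subshift2 :: "(int \<Rightarrow> 'a::finite) set \<Rightarrow> bool" where
  "subshift2 X \<longleftrightarrow> X \<noteq> {} \<and> closed2 X \<and> shift2 ` X = X"

definition natext :: "(nat \<Rightarrow> 'a) set \<Rightarrow> (int \<Rightarrow> 'a) set" where
  "natext X = {x. \<forall>p::int. (\<lambda>i::nat. x (p + int i)) \<in> X}"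

definition lang1 :: "(nat \<Rightarrow> 'a) set \<Rightarrow> 'a list set" where
  "lang1 X = {w. \<exists>x\<in>X. \<exists>p::nat. w = map (\<lambda>i. x (p + i)) [0..<length w]}"

definition lang2 :: "(int \<Rightarrow> 'a) set \<Rightarrow> 'a list set" where
  "lang2 X = {w. \<exists>x\<in>X. \<exists>p::int. w = map (\<lambda>i. x (p + int i)) [0..<length w]}"

text \<open>Followers of a block w = a_{-n} ... a_0 (list of length n+1, last entry at
  coordinate 0), computed in the two-sided subshift T (= the natural extension).
  Right rays of points of T are exactly the elements of X^+.\<close>
definition fol :: "(int \<Rightarrow> 'a) set \<Rightarrow> 'a list \<Rightarrow> (nat \<Rightarrow> 'a) set" where
  "fol T w = {(\<lambda>i::nat. b (int i)) | b. b \<in> T \<and>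
       (\<forall>i<length w. b (int i - int (length w) + 1) = w ! i)}"

definition significant :: "(int \<Rightarrow> 'a) set \<Rightarrow> 'a list \<Rightarrow> bool" where
  "significant T w \<longleftrightarrow> w \<in> lang2 T \<and>
     (length w = 1 \<or> (length w \<ge> 2 \<and> fol T w \<subset> fol T (tl w)))"

definition sig :: "(int \<Rightarrow> 'a) set \<Rightarrow> 'a list \<Rightarrow> 'a list" where
  "sig T w = drop (length w - (GREATEST k. k \<le> length w \<and> significant T (drop (length w - k) w))) w"

definition hb_edge :: "(int \<Rightarrow> 'a) set \<Rightarrow> 'a list \<Rightarrow> 'a list \<Rightarrow> bool" where
  "hb_edge T \<alpha> \<beta> \<longleftrightarrow> significant T \<alpha> \<and> significant T \<beta> \<and>
     (\<exists>b. \<alpha> @ [b] \<in> lang2 T \<and> \<beta> = sig T (\<alpha> @ [b]))"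

text \<open>Paths in the HB diagram of T with n vertices starting at a length-one vertex.\<close>
definition hb_paths_from_symbols :: "(int \<Rightarrow> 'a) set \<Rightarrow> nat \<Rightarrow> 'a list list set" where
  "hb_paths_from_symbols T n = {ps. length ps = n \<and> (\<forall>v\<in>set ps. significant T v) \<and>
      length (hd ps) = 1 \<and> (\<forall>i. Suc i < n \<longrightarrow> hb_edge T (ps ! i) (ps ! Suc i))}"

end

theory Submission
  imports Defs
begin

definition ends :: "(int \<Rightarrow> 'a) set \<Rightarrow> 'a list \<Rightarrow> (int \<Rightarrow> 'a) \<Rightarrow> bool" where
  "ends T w b \<longleftrightarrow> b \<in> T \<and> (\<forall>i<length w. b (int i - int (length w) + 1) = w ! i)"

lemma fol_ends: "fol T w = (\<lambda>b i. b (int i)) ` {b. ends T w b}"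
  by (auto simp: fol_def ends_def)

definition Gs :: "(int \<Rightarrow> 'a) set \<Rightarrow> 'a list \<Rightarrow> nat" where
  "Gs T u = (GREATEST k. k \<le> length u \<and> significant T (drop (length u - k) u))"

lemma sig_Gs: "sig T u = drop (length u - Gs T u) u"
  by (simp add: sig_def Gs_def)

context
  fixes T :: "(int \<Rightarrow> 'a) set"
  assumes sh: "\<And>x. shift2 x \<in> T \<longleftrightarrow> x \<in> T"
begin

lemma trans_nat: "(\<lambda>i. x (i + int m)) \<in> T \<longleftrightarrow> x \<in> T"
proof (induction m)
  case 0 then show ?case by simp
next
  case (Suc m)
  have "(\<lambda>i. x (i + int (Suc m))) = shift2 (\<lambda>i. x (i + int m))"
    by (auto simp: shift2_def algebra_simps)
  then show ?case using Suc sh by simp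
qed

lemma trans_int: "(\<lambda>i. x (i + k)) \<in> T \<longleftrightarrow> x \<in> T"
proof (cases "k \<ge> 0")
  case True
  then have "k = int (nat k)" by simp
  then show ?thesis using trans_nat[of x "nat k"] by simp
next
  case False
  define m where "m = nat (-k)"
  have m: "k = - int m" using False by (simp add: m_def)
  define y where "y = (\<lambda>i. x (i + k))"
  have e: "(\<lambda>i. y (i + int m)) = x" by (simp add: y_def m)
  have "y \<in> T \<longleftrightarrow> x \<in> T" using trans_nat[of y m] unfolding e by simp
  then show ?thesis by (simp add: y_def)
qed

lemma lang_fol: "w \<in> lang2 T \<longleftrightarrow> fol T w \<noteq> {}"
proof
  assume "w \<in> lang2 T"
  then obtain x p where x: "x \<in> T" and w: "w = map (\<lambda>i. x (p + int i)) [0..<length w]"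
    by (auto simp: lang2_def)
  define b where "b = (\<lambda>j. x (j + (p + int (length w) - 1)))"
  have "b \<in> T" using x trans_int by (simp add: b_def)
  moreover have "\<forall>i<length w. b (int i - int (length w) + 1) = w ! i"
  proof (intro allI impI)
    fix i assume i: "i < length w"
    have "w ! i = (map (\<lambda>i. x (p + int i)) [0..<length w]) ! i"
      using w by (rule arg_cong[where f="\<lambda>l. l ! i"])
    also have "\<dots> = x (p + int i)" using i by simp
    finally show "b (int i - int (length w) + 1) = w ! i" by (simp add: b_def algebra_simps)
  qed
  ultimately show "fol T w \<noteq> {}" by (auto simp: fol_def)
next
  assume "fol T w \<noteq> {}"
  then obtain b where b: "b \<in> T" "\<forall>i<length w. b (int i - int (length w) + 1) = w ! i"
    by (auto simp: fol_def)
  have "w = map (\<lambda>i. b ((1 - int (length w)) + int i)) [0..<length w]"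
    by (rule nth_equalityI) (use b in \<open>auto simp: algebra_simps\<close>)
  then show "w \<in> lang2 T" using b(1) unfolding lang2_def by blast
qed

lemma F1: "fol T w \<subseteq> fol T (tl w)"
proof -
  have "ends T (tl w) b" if "ends T w b" for b
  proof (cases w)
    case Nil then show ?thesis using that by (simp add: ends_def)
  next
    case (Cons x xs)
    show ?thesis unfolding ends_def
    proof (intro conjI allI impI)
      show "b \<in> T" using that by (simp add: ends_def)
      fix i assume "i < length (tl w)"
      then have "Suc i < length w" using Cons by simp
      have all: "\<forall>j<length w. b (int j - int (length w) + 1) = w ! j" using that by (simp add: ends_def)
      have "b (int (Suc i) - int (length w) + 1) = w ! Suc i" using all \<open>Suc i < length w\<close> by blast
      moreover have "int (Suc i) - int (length w) + 1 = int i - int (length (tl w)) + 1" using Cons by simp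
      moreover have "w ! Suc i = tl w ! i" using Cons by simp
      ultimately show "b (int i - int (length (tl w)) + 1) = tl w ! i" by simp
    qed
  qed
  then show ?thesis unfolding fol_ends by auto
qed

lemma F2: "fol T (w @ [a]) = (\<lambda>r i. r (Suc i)) ` {r \<in> fol T w. r 1 = a}"
proof (rule set_eqI, rule iffI)
  fix x assume "x \<in> fol T (w @ [a])"
  then obtain b where b: "ends T (w @ [a]) b" and x: "x = (\<lambda>i. b (int i))" unfolding fol_ends by auto
  define c where "c = (\<lambda>j. b (j + (-1)))"
  have cT: "c \<in> T" unfolding c_def using trans_int[of b "-1"] b by (simp add: ends_def)
  have ec: "ends T w c" unfolding ends_def
  proof (intro conjI allI impI)
    show "c \<in> T" by (fact cT)
    fix i assume i: "i < length w"
    then have "b (int i - int (length (w@[a])) + 1) = (w@[a]) ! i" using b by (simp add: ends_def)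
    then show "c (int i - int (length w) + 1) = w ! i" using i by (simp add: c_def nth_append algebra_simps)
  qed
  have ball: "\<forall>i<length (w@[a]). b (int i - int (length (w@[a])) + 1) = (w@[a]) ! i" using b unfolding ends_def by blast
  have "b (int (length w) - int (length (w@[a])) + 1) = (w@[a]) ! length w" using ball by (metis length_append_singleton lessI)
  then have c1: "c 1 = a" by (simp add: c_def)
  have "(\<lambda>i. c (int i)) \<in> fol T w" unfolding fol_ends using ec by auto
  moreover have "x = (\<lambda>i. (\<lambda>i. c (int i)) (Suc i))" by (simp add: x c_def)
  ultimately show "x \<in> (\<lambda>r i. r (Suc i)) ` {r \<in> fol T w. r 1 = a}" using c1 by (intro image_eqI[where x="\<lambda>i. c (int i)"]) auto
next
  fix x assume "x \<in> (\<lambda>r i. r (Suc i)) ` {r \<in> fol T w. r 1 = a}"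
  then obtain c where ec: "ends T w c" and c1: "c 1 = a" and x: "x = (\<lambda>i. c (int (Suc i)))"
    unfolding fol_ends by auto
  define b where "b = (\<lambda>j. c (j + 1))"
  have bT: "b \<in> T" using ec trans_int by (simp add: b_def ends_def)
  have "ends T (w @ [a]) b" unfolding ends_def
  proof (intro conjI allI impI)
    show "b \<in> T" by (fact bT)
    fix i assume i: "i < length (w @ [a])"
    show "b (int i - int (length (w @ [a])) + 1) = (w @ [a]) ! i"
    proof (cases "i < length w")
      case True
      then have "c (int i - int (length w) + 1) = w ! i" using ec by (simp add: ends_def)
      then show ?thesis using True by (simp add: b_def nth_append algebra_simps)
    next
      case False
      then have "i = length w" using i by simp
      then show ?thesis using c1 by (simp add: b_def)
    qed
  qed
  moreover have "x = (\<lambda>i. b (int i))" by (simp add: x b_def add.commute)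
  ultimately show "x \<in> fol T (w @ [a])" unfolding fol_ends by auto
qed

lemma fol_tl_ne: "fol T w \<noteq> {} \<Longrightarrow> fol T (tl w) \<noteq> {}" using F1 by auto

lemma fol_drop_ne: "fol T w \<noteq> {} \<Longrightarrow> fol T (drop k w) \<noteq> {}"
proof (induction k)
  case 0 then show ?case by simp
next
  case (Suc k)
  have "drop (Suc k) w = tl (drop k w)" by (simp add: drop_Suc tl_drop)
  then show ?case using Suc fol_tl_ne by simp
qed

lemma fol_snoc_ne: "fol T (w @ [a]) \<noteq> {} \<Longrightarrow> fol T w \<noteq> {}"
  using F2[of w a] by auto

lemma fol_app_ne: "fol T (xs @ ys) \<noteq> {} \<Longrightarrow> fol T xs \<noteq> {}"
proof (induction ys rule: rev_induct)
  case Nil then show ?case by simp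
next
  case (snoc y ys)
  then show ?case using fol_snoc_ne[of "xs @ ys" y] by simp
qed

lemma fol_take_ne: "fol T w \<noteq> {} \<Longrightarrow> fol T (take k w) \<noteq> {}"
  using fol_app_ne[of "take k w" "drop k w"] by simp

lemma sig_iff: "significant T w \<longleftrightarrow> fol T w \<noteq> {} \<and> (length w = 1 \<or> (length w \<ge> 2 \<and> fol T w \<subset> fol T (tl w)))"
  by (simp add: significant_def lang_fol)

lemma drop_last1: "u \<noteq> [] \<Longrightarrow> drop (length u - 1) u = [last u]"
  by (cases u rule: rev_cases) auto

lemma Gs_props:
  assumes "u \<noteq> []" "fol T u \<noteq> {}"
  shows "1 \<le> Gs T u" "Gs T u \<le> length u" "significant T (drop (length u - Gs T u) u)"
    "\<And>j. j \<le> length u \<Longrightarrow> significant T (drop (length u - j) u) \<Longrightarrow> j \<le> Gs T u"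
proof -
  let ?P = "\<lambda>k. k \<le> length u \<and> significant T (drop (length u - k) u)"
  have "fol T [last u] \<noteq> {}" using fol_drop_ne[OF assms(2), of "length u - 1"] drop_last1[OF assms(1)] by simp
  then have P1: "?P 1" using assms(1) drop_last1[OF assms(1)] by (simp add: sig_iff Suc_leI)
  have bnd: "\<And>y. ?P y \<Longrightarrow> y \<le> length u" by simp
  have G: "?P (Gs T u)" unfolding Gs_def using GreatestI_nat[of ?P 1 "length u"] P1 by blast
  have le: "j \<le> Gs T u" if "?P j" for j unfolding Gs_def using Greatest_le_nat[of ?P j "length u"] that by blast
  show "1 \<le> Gs T u" using le[OF P1] .
  show "Gs T u \<le> length u" using G by simp
  show "significant T (drop (length u - Gs T u) u)" using G by simp
  show "\<And>j. j \<le> length u \<Longrightarrow> significant T (drop (length u - j) u) \<Longrightarrow> j \<le> Gs T u" using le by simp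
qed

lemma sig_props:
  assumes "u \<noteq> []" "fol T u \<noteq> {}"
  shows "significant T (sig T u)" "length (sig T u) = Gs T u" "last (sig T u) = last u"
proof -
  note G = Gs_props[OF assms]
  show "significant T (sig T u)" using G(3) by (simp add: sig_Gs)
  show "length (sig T u) = Gs T u" using G(2) by (simp add: sig_Gs)
  show "last (sig T u) = last u" using G(1,2) by (simp add: sig_Gs)
qed

lemma sig_suffix:
  assumes "u \<noteq> []" "fol T u \<noteq> {}" "Gs T u \<le> L" "L \<le> length u"
  shows "sig T (drop (length u - L) u) = sig T u"
proof -
  note G = Gs_props[OF assms(1,2)]
  define v where "v = drop (length u - L) u"
  have lv: "length v = L" using assms(4) by (simp add: v_def)
  have dv: "drop (L - k) v = drop (length u - k) u" if "k \<le> L" for k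
    using that assms(4) by (simp add: v_def drop_drop)
  have "Gs T v = Gs T u" unfolding Gs_def[of T v] lv
  proof (rule Greatest_equality)
    show "Gs T u \<le> L \<and> significant T (drop (L - Gs T u) v)" using G(3) dv assms(3) by simp
  next
    fix y assume y: "y \<le> L \<and> significant T (drop (L - y) v)"
    then show "y \<le> Gs T u" using dv[of y] G(4)[of y] assms(4) by simp
  qed
  then show ?thesis unfolding v_def[symmetric] sig_Gs lv using dv assms(3) by simp
qed

lemma fol_sig:
  assumes "u \<noteq> []" "fol T u \<noteq> {}"
  shows "fol T (sig T u) = fol T u"
proof -
  note G = Gs_props[OF assms]
  have "\<forall>j. Gs T u \<le> j \<longrightarrow> j \<le> length u \<longrightarrow> fol T (drop (length u - j) u) = fol T (sig T u)"
  proof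
    fix j show "Gs T u \<le> j \<longrightarrow> j \<le> length u \<longrightarrow> fol T (drop (length u - j) u) = fol T (sig T u)"
    proof (induction j)
      case 0 show ?case using G(1) by simp
    next
      case (Suc j)
      show ?case
      proof (intro impI)
        assume a: "Gs T u \<le> Suc j" "Suc j \<le> length u"
        show "fol T (drop (length u - Suc j) u) = fol T (sig T u)"
        proof (cases "Suc j = Gs T u")
          case True then show ?thesis by (simp add: sig_Gs)
        next
          case False
          then have j: "Gs T u \<le> j" using a by simp
          define s where "s = drop (length u - Suc j) u"
          have e1: "length u - j = Suc (length u - Suc j)" using a(2) by simp
          have ts: "tl s = drop (length u - j) u" unfolding e1 by (simp add: s_def drop_Suc tl_drop)
          have sne: "fol T s \<noteq> {}" using assms(2) fol_drop_ne s_def by blast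
          have ls: "length s = Suc j" using a(2) by (simp add: s_def)
          have ns: "\<not> significant T s"
          proof
            assume "significant T s"
            then have "Suc j \<le> Gs T u" using G(4)[of "Suc j"] a(2) s_def by blast
            then show False using j by simp
          qed
          have "length s \<ge> 2" using j G(1) ls by simp
          then have "\<not> fol T s \<subset> fol T (tl s)" using ns sne by (simp add: sig_iff)
          then have "fol T s = fol T (tl s)" using F1[of s] by blast
          then show ?thesis using Suc.IH j a ts s_def by simp
        qed
      qed
    qed
  qed
  then show ?thesis using G(1,2) by (metis diff_self_eq_0 drop_0 order_refl)
qed

lemma sig_prefix:
  assumes "s \<noteq> []" "significant T (s @ [a])"
  shows "significant T s"
proof -
  have ne: "fol T (s @ [a]) \<noteq> {}" and strict: "fol T (s @ [a]) \<subset> fol T (tl (s @ [a]))"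
    using assms by (auto simp: sig_iff)
  have sne: "fol T s \<noteq> {}" using ne fol_snoc_ne by blast
  show ?thesis
  proof (cases "length s = 1")
    case True then show ?thesis using sne by (simp add: sig_iff)
  next
    case False
    then have "length s \<ge> 2" using assms(1) by (cases "length s") auto
    moreover have "fol T s \<subset> fol T (tl s)"
    proof -
      have "fol T s \<noteq> fol T (tl s)"
      proof
        assume e: "fol T s = fol T (tl s)"
        have "tl (s @ [a]) = tl s @ [a]" using assms(1) by simp
        then have "fol T (tl (s @ [a])) = fol T (s @ [a])" using F2[of s a] F2[of "tl s" a] e by simp
        then show False using strict by simp
      qed
      then show ?thesis using F1[of s] by blast
    qed
    ultimately show ?thesis using sne by (simp add: sig_iff)
  qed
qed

lemma Gs_snoc:
  assumes "u \<noteq> []" "fol T (u @ [a]) \<noteq> {}"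
  shows "Gs T (u @ [a]) \<le> Suc (Gs T u)"
proof -
  have une: "fol T u \<noteq> {}" using assms(2) fol_snoc_ne by blast
  let ?k = "Gs T (u @ [a])"
  have k: "?k \<le> Suc (length u)" "significant T (drop (Suc (length u) - ?k) (u @ [a]))"
    using Gs_props[of "u @ [a]"] assms(2) by auto
  show ?thesis
  proof (cases "?k \<le> 1")
    case True then show ?thesis by simp
  next
    case False
    define s where "s = drop (length u - (?k - 1)) u"
    have e0: "Suc (length u) - ?k = length u - (?k - 1)" using False by simp
    have e: "drop (Suc (length u) - ?k) (u @ [a]) = s @ [a]" unfolding e0 using False
      by (simp add: s_def)
    have sne: "s \<noteq> []" using False k(1) by (simp add: s_def)
    have "significant T s" using sig_prefix[OF sne] k(2) e by simp
    then have "?k - 1 \<le> Gs T u" using Gs_props(4)[OF assms(1) une, of "?k - 1"] k(1) s_def by simp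
    then show ?thesis by simp
  qed
qed

lemma sig_snoc:
  assumes "u \<noteq> []" "fol T (u @ [a]) \<noteq> {}"
  shows "sig T (sig T u @ [a]) = sig T (u @ [a])"
proof -
  have une: "fol T u \<noteq> {}" using assms(2) fol_snoc_ne by blast
  have G2: "Gs T u \<le> length u" using Gs_props(2)[OF assms(1) une] .
  have "sig T u @ [a] = drop (length (u @ [a]) - Suc (Gs T u)) (u @ [a])"
    using G2 by (simp add: sig_Gs)
  then show ?thesis using sig_suffix[of "u @ [a]" "Suc (Gs T u)"] Gs_snoc[OF assms] G2 assms(2) by simp
qed


lemma main:
  assumes n: "n \<ge> 1"
  shows "card (hb_paths_from_symbols T n) = card {w \<in> lang2 T. length w = n}"
proof -
  let ?W = "{w \<in> lang2 T. length w = n}"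
  define f where "f w = map (\<lambda>k. sig T (take (Suc k) w)) [0..<n]" for w
  have pre: "take (Suc k) w \<noteq> [] \<and> fol T (take (Suc k) w) \<noteq> {}" if "w \<in> ?W" "k < n" for w k
    using that fol_take_ne by (auto simp: lang_fol)
  have lastk: "last (take (Suc k) w) = w ! k" if "k < length w" for w :: "'a list" and k
    using that by (simp add: take_Suc_conv_app_nth)
  have inv: "map last (f w) = w" if w: "w \<in> ?W" for w
  proof (rule nth_equalityI)
    show "length (map last (f w)) = length w" using w by (simp add: f_def)
    fix k assume "k < length (map last (f w))"
    then have k: "k < n" by (simp add: f_def)
    have "map last (f w) ! k = last (sig T (take (Suc k) w))" using k by (simp add: f_def)
    also have "\<dots> = last (take (Suc k) w)" using sig_props(3) pre[OF w k] by blast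
    also have "\<dots> = w ! k" using lastk k w by simp
    finally show "map last (f w) ! k = w ! k" .
  qed
  have inj: "inj_on f ?W" by (rule inj_on_inverseI[where g="map last"]) (rule inv)
  have img: "hb_paths_from_symbols T n = f ` ?W"
  proof
    show "f ` ?W \<subseteq> hb_paths_from_symbols T n"
    proof
      fix ps assume "ps \<in> f ` ?W"
      then obtain w where w: "w \<in> ?W" and ps: "ps = f w" by auto
      have len: "length ps = n" by (simp add: ps f_def)
      have nth: "ps ! k = sig T (take (Suc k) w)" if "k < n" for k using that by (simp add: ps f_def)
      have sigk: "significant T (ps ! k)" if "k < n" for k
        using nth[OF that] sig_props(1) pre[OF w that] by simp
      show "ps \<in> hb_paths_from_symbols T n" unfolding hb_paths_from_symbols_def
      proof (intro CollectI conjI ballI allI impI)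
        show "length ps = n" by (fact len)
        fix v assume "v \<in> set ps"
        then obtain k where "k < n" "v = ps ! k" using len by (auto simp: in_set_conv_nth)
        then show "significant T v" using sigk by simp
      next
        have "ps \<noteq> []" using len n by auto
        then have "hd ps = ps ! 0" by (simp add: hd_conv_nth)
        also have "\<dots> = sig T (take 1 w)" using nth[of 0] n by simp
        finally have h: "hd ps = sig T (take 1 w)" .
        have "length (sig T (take 1 w)) = Gs T (take 1 w)" using sig_props(2) pre[OF w, of 0] n by simp
        moreover have pw: "take 1 w \<noteq> []" "fol T (take 1 w) \<noteq> {}" using pre[OF w, of 0] n by simp_all
        moreover have "1 \<le> Gs T (take 1 w)" "Gs T (take 1 w) \<le> length (take 1 w)"
          using Gs_props(1,2)[OF pw] by simp_all
        moreover have "length (take 1 w) = 1" using w n by simp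
        ultimately show "length (hd ps) = 1" using h by simp
      next
        fix i assume i: "Suc i < n"
        define u where "u = take (Suc i) w"
        define b where "b = w ! Suc i"
        have lw: "length w = n" using w by simp
        have ub: "take (Suc (Suc i)) w = u @ [b]" using i lw by (simp add: u_def b_def take_Suc_conv_app_nth)
        have une: "u \<noteq> []" "fol T u \<noteq> {}" using pre[OF w, of i] i by (simp_all add: u_def)
        have ubne: "fol T (u @ [b]) \<noteq> {}" using pre[OF w i] ub by simp
        have "fol T (sig T u @ [b]) = fol T (u @ [b])" using F2[of "sig T u" b] F2[of u b] fol_sig[OF une] by simp
        then have l: "sig T u @ [b] \<in> lang2 T" using ubne lang_fol by simp
        have "ps ! Suc i = sig T (sig T u @ [b])" using nth[OF i] ub sig_snoc[OF une(1) ubne] by simp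
        moreover have "ps ! i = sig T u" using nth[of i] i by (simp add: u_def)
        ultimately show "hb_edge T (ps ! i) (ps ! Suc i)" unfolding hb_edge_def
          using sigk[of i] sigk[OF i] l i by auto
      qed
    qed
  next
    show "hb_paths_from_symbols T n \<subseteq> f ` ?W"
    proof
      fix ps assume ps: "ps \<in> hb_paths_from_symbols T n"
      have len: "length ps = n" using ps by (simp add: hb_paths_from_symbols_def)
      have sigk: "significant T (ps ! k)" if "k < n" for k
        using ps that len by (auto simp: hb_paths_from_symbols_def)
      have "ps \<noteq> []" using len n by auto
      then have "hd ps = ps ! 0" by (simp add: hd_conv_nth)
      then have hd1: "length (ps ! 0) = 1" using ps by (simp add: hb_paths_from_symbols_def)
      have edge: "hb_edge T (ps ! i) (ps ! Suc i)" if "Suc i < n" for i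
        using ps that by (simp add: hb_paths_from_symbols_def)
      define w where "w = map last ps"
      have lw: "length w = n" by (simp add: w_def len)
      have claim: "k < n \<longrightarrow> fol T (take (Suc k) w) \<noteq> {} \<and> ps ! k = sig T (take (Suc k) w)" for k
      proof (induction k)
        case 0
        show ?case
        proof
          assume "0 < n"
          obtain x where x: "ps ! 0 = [x]" using hd1 by (cases "ps ! 0") auto
          have "w ! 0 = x" using x n len by (simp add: w_def)
          then have t1: "take (Suc 0) w = [x]" using lw n by (cases w) auto
          have fx: "fol T [x] \<noteq> {}" using sigk[of 0] n x by (simp add: sig_iff)
          have "Gs T [x] = 1" using Gs_props(1,2)[of "[x]"] fx by simp
          then have "sig T [x] = [x]" by (simp add: sig_Gs)
          then show "fol T (take (Suc 0) w) \<noteq> {} \<and> ps ! 0 = sig T (take (Suc 0) w)"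
            using t1 fx x by simp
        qed
      next
        case (Suc k)
        show ?case
        proof
          assume sk: "Suc k < n"
          then have IH: "fol T (take (Suc k) w) \<noteq> {}" "ps ! k = sig T (take (Suc k) w)"
            using Suc.IH by auto
          define u where "u = take (Suc k) w"
          have une: "u \<noteq> []" "fol T u \<noteq> {}" using IH sk lw by (auto simp: u_def)
          obtain b where b: "ps ! k @ [b] \<in> lang2 T" "ps ! Suc k = sig T (ps ! k @ [b])"
            using edge[OF sk] by (auto simp: hb_edge_def)
          have bne: "fol T (ps ! k @ [b]) \<noteq> {}" using b(1) lang_fol by simp
          have "w ! Suc k = last (ps ! Suc k)" using sk len by (simp add: w_def)
          also have "\<dots> = last (ps ! k @ [b])" using b(2) sig_props(3)[OF _ bne] by simp
          finally have wb: "w ! Suc k = b" by simp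
          have ub: "take (Suc (Suc k)) w = u @ [b]" using sk lw wb by (simp add: u_def take_Suc_conv_app_nth)
          have "fol T (u @ [b]) = fol T (ps ! k @ [b])"
            using F2[of u b] F2[of "ps ! k" b] fol_sig[OF une] IH(2) by (simp add: u_def)
          then have ubne: "fol T (u @ [b]) \<noteq> {}" using bne by simp
          have "ps ! Suc k = sig T (u @ [b])" using b(2) IH(2) sig_snoc[OF une(1) ubne] by (simp add: u_def)
          then show "fol T (take (Suc (Suc k)) w) \<noteq> {} \<and> ps ! Suc k = sig T (take (Suc (Suc k)) w)"
            using ub ubne by simp
        qed
      qed
      have "n - 1 < n" using n by simp
      then have "fol T (take n w) \<noteq> {}" using claim[of "n - 1"] n by simp
      then have wW: "w \<in> ?W" using lw lang_fol by simp
      have "ps = f w"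
      proof (rule nth_equalityI)
        show "length ps = length (f w)" using len by (simp add: f_def)
        fix k assume "k < length ps"
        then show "ps ! k = f w ! k" using claim[of k] len by (simp add: f_def)
      qed
      then show "ps \<in> f ` ?W" using wW by blast
    qed
  qed
  show ?thesis using img inj card_image by simp
qed

end

lemma natext_sh: "shift2 x \<in> natext X \<longleftrightarrow> x \<in> natext X"
proof
  assume a: "shift2 x \<in> natext X"
  show "x \<in> natext X" unfolding natext_def
  proof (intro CollectI allI)
    fix p :: int
    have "(\<lambda>i::nat. shift2 x ((p - 1) + int i)) \<in> X" using a by (simp add: natext_def)
    then show "(\<lambda>i::nat. x (p + int i)) \<in> X" by (simp add: shift2_def algebra_simps)
  qed
next
  assume a: "x \<in> natext X"
  show "shift2 x \<in> natext X" unfolding natext_def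
  proof (intro CollectI allI)
    fix p :: int
    have "(\<lambda>i::nat. x ((p + 1) + int i)) \<in> X" using a by (simp add: natext_def)
    then show "(\<lambda>i::nat. shift2 x (p + int i)) \<in> X" by (simp add: shift2_def algebra_simps)
  qed
qed

lemma shift2_inj: "shift2 x = shift2 y \<Longrightarrow> x = y"
proof
  fix i :: int assume "shift2 x = shift2 y"
  then have "shift2 x (i - 1) = shift2 y (i - 1)" by simp
  then show "x i = y i" by (simp add: shift2_def)
qed

lemma sub2_sh: "subshift2 X \<Longrightarrow> shift2 x \<in> X \<longleftrightarrow> x \<in> X"
  unfolding subshift2_def by (metis image_iff shift2_inj)

theorem corollary5p9:
  shows "(\<forall>(Xp :: (nat \<Rightarrow> 'a::finite) set). subshift1 Xp \<and> lang1 Xp = lang2 (natext Xp) \<longrightarrow>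
           (\<forall>n\<ge>1. card (hb_paths_from_symbols (natext Xp) n) = card {w\<in>lang1 Xp. length w = n}))
       \<and> (\<forall>(X :: (int \<Rightarrow> 'a::finite) set). subshift2 X \<longrightarrow>
           (\<forall>n\<ge>1. card (hb_paths_from_symbols X n) = card {w\<in>lang2 X. length w = n}))"
proof (intro conjI allI impI)
  fix Xp :: "(nat \<Rightarrow> 'a) set" and n :: nat
  assume "subshift1 Xp \<and> lang1 Xp = lang2 (natext Xp)" "1 \<le> n"
  then show "card (hb_paths_from_symbols (natext Xp) n) = card {w\<in>lang1 Xp. length w = n}"
    using main[of "natext Xp" n, OF natext_sh] by simp
next
  fix X :: "(int \<Rightarrow> 'a) set" and n :: nat
  assume "subshift2 X" "1 \<le> n"
  then show "card (hb_paths_from_symbols X n) = card {w\<in>lang2 X. length w = n}"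
    using main[of X n, OF sub2_sh] by simp
qed

end
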